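(* Consider a finite set of jobs $1,\dots,n$ to be processed on a single machine with preemption, where job $i$ has release time $r_i\ge 0$ and size (processing requirement) $p_i>0$. Let $S=[s_1,\dots,s_n]$ be an ordering of the jobs, and let $\omega$ be any schedule with completion sequence $S$. Then the schedule $\mathrm{Pri}_S$ dominates $\omega$, i.e. $C_{i,\mathrm{Pri}_S}\le C_{i,\omega}$ for every job $i$.
   Context: A schedule is a (measurable) function $\omega(i,t)\ge 0$ giving the fraction of the machine's unit-rate resource allocated to job $i$ at time $t$, with $\sum_i \omega(i,t)\le 1$ for all $t$, and $\omega(i,t)=0$ whenever job $i$ is not pending at time $t$. Job $i$ is pending at time $t$ if it has been released ($t\ge r_i$) and not yet completed. The completion time $C_{i,\omega}$ of job $i$ under $\omega$ is the earliest time $C$ such that $\int_{r_i}^{C}\omega(i,t)\,dt = p_i$. A schedule $\omega$ dominates a schedule $\omega'$ if $C_{i,\omega}\le C_{i,\omega'}$ for every job $i$. A completion sequence is an ordering $S=[s_1,\dots,s_n]$ of the jobs; a schedule $\omega$ has completion sequence $S$ if $C_{s_i,\omega}\le C_{s_j,\omega}$ for all $i<j$. For a completion sequence $S$, the schedule $\mathrm{Pri}_S$ is defined by $\mathrm{Pri}_S(i,t)=1$ if $i$ is the first job in $S$ that is pending at time $t$, and $\mathrm{Pri}_S(i,t)=0$ otherwise. *)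

theory Defs
  imports "HOL-Analysis.Analysis"
begin

text \<open>Jobs are 0..<n.  A schedule is a function w :: nat => real => real,
  w i t = fraction of the machine given to job i at time t.\<close>

definition work_done :: "(nat \<Rightarrow> real \<Rightarrow> real) \<Rightarrow> (nat \<Rightarrow> real) \<Rightarrow> nat \<Rightarrow> real \<Rightarrow> real" where
  "work_done w r i C = (LBINT t:{r i..C}. w i t)"

definition completion :: "(nat \<Rightarrow> real \<Rightarrow> real) \<Rightarrow> (nat \<Rightarrow> real) \<Rightarrow> (nat \<Rightarrow> real) \<Rightarrow> nat \<Rightarrow> real" where
  "completion w r p i = Inf {C. r i \<le> C \<and> work_done w r i C = p i}"

definition pending :: "(nat \<Rightarrow> real \<Rightarrow> real) \<Rightarrow> (nat \<Rightarrow> real) \<Rightarrow> (nat \<Rightarrow> real) \<Rightarrow> nat \<Rightarrow> real \<Rightarrow> bool" where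
  "pending w r p i t \<longleftrightarrow> r i \<le> t \<and> t < completion w r p i"

definition is_schedule :: "nat \<Rightarrow> (nat \<Rightarrow> real) \<Rightarrow> (nat \<Rightarrow> real) \<Rightarrow> (nat \<Rightarrow> real \<Rightarrow> real) \<Rightarrow> bool" where
  "is_schedule n r p w \<longleftrightarrow>
     (\<forall>i<n. w i \<in> borel_measurable borel) \<and>
     (\<forall>i<n. \<forall>t. 0 \<le> w i t) \<and>
     (\<forall>t. (\<Sum>i<n. w i t) \<le> 1) \<and>
     (\<forall>i<n. \<forall>t. \<not> pending w r p i t \<longrightarrow> w i t = 0) \<and>
     (\<forall>i<n. \<exists>C. r i \<le> C \<and> work_done w r i C = p i)"

definition dominates :: "nat \<Rightarrow> (nat \<Rightarrow> real) \<Rightarrow> (nat \<Rightarrow> real) \<Rightarrow> (nat \<Rightarrow> real \<Rightarrow> real) \<Rightarrow> (nat \<Rightarrow> real \<Rightarrow> real) \<Rightarrow> bool" where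
  "dominates n r p w w' \<longleftrightarrow> (\<forall>i<n. completion w r p i \<le> completion w' r p i)"

definition is_ordering :: "nat \<Rightarrow> nat list \<Rightarrow> bool" where
  "is_ordering n S \<longleftrightarrow> distinct S \<and> set S = {..<n}"

definition has_completion_sequence :: "(nat \<Rightarrow> real) \<Rightarrow> (nat \<Rightarrow> real) \<Rightarrow> (nat \<Rightarrow> real \<Rightarrow> real) \<Rightarrow> nat list \<Rightarrow> bool" where
  "has_completion_sequence r p w S \<longleftrightarrow>
     (\<forall>a b. a < b \<and> b < length S \<longrightarrow> completion w r p (S ! a) \<le> completion w r p (S ! b))"

text \<open>Pri_S is defined self-referentially (pending refers to completion under Pri_S itself):
  job i gets rate 1 at t iff i is pending and no job earlier in S is pending.\<close>
definition is_Pri :: "nat \<Rightarrow> (nat \<Rightarrow> real) \<Rightarrow> (nat \<Rightarrow> real) \<Rightarrow> nat list \<Rightarrow> (nat \<Rightarrow> real \<Rightarrow> real) \<Rightarrow> bool" where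
  "is_Pri n r p S w \<longleftrightarrow> is_schedule n r p w \<and>
     (\<forall>i<n. \<forall>t. w i t =
        (if pending w r p i t \<and>
            (\<forall>a b. a < b \<and> b < length S \<and> S ! b = i \<longrightarrow> \<not> pending w r p (S ! a) t)
         then 1 else 0))"

end

theory Submission imports Defs begin

abbreviation IW :: "(nat \<Rightarrow> real \<Rightarrow> real) \<Rightarrow> nat \<Rightarrow> real \<Rightarrow> real \<Rightarrow> real" where
  "IW w i a b \<equiv> integral\<^sup>L lborel (\<lambda>t. indicator {a..b} t * w i t)"


lemma wd_eq: "work_done w r i C = IW w i (r i) C"
  by (simp add: work_done_def set_lebesgue_integral_def)

lemma sched_nonneg: "is_schedule n r p w \<Longrightarrow> i < n \<Longrightarrow> 0 \<le> w i t"
  by (simp add: is_schedule_def)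

lemma sched_le1: assumes "is_schedule n r p w" "i < n" shows "w i t \<le> 1"
proof -
  have "w i t \<le> (\<Sum>j<n. w j t)"
    by (rule member_le_sum) (use assms in \<open>auto simp: is_schedule_def\<close>)
  also have "\<dots> \<le> 1" using assms by (simp add: is_schedule_def)
  finally show ?thesis .
qed

lemma sched_zero_or_pending: "is_schedule n r p w \<Longrightarrow> i < n \<Longrightarrow>
   w i t = 0 \<or> (r i \<le> t \<and> t < completion w r p i)"
  unfolding is_schedule_def pending_def by blast

lemma integ: assumes "is_schedule n r p w" "i < n"
  shows "integrable lborel (\<lambda>t. indicator {a..b} t * w i t)"
proof -
  have I: "integrable lborel (indicator {a..b} :: real \<Rightarrow> real)"
    by (rule integrable_real_indicator) (auto simp: emeasure_lborel_Icc_eq)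
  have "w i \<in> borel_measurable borel" using assms by (simp add: is_schedule_def)
  then have M: "(\<lambda>t. indicator {a..b} t * w i t) \<in> borel_measurable lborel" by measurable
  have A: "AE x in lborel. norm (indicator {a..b} x * w i x) \<le> norm (indicator {a..b} x :: real)"
    using sched_nonneg[OF assms] sched_le1[OF assms]
    by (auto simp: indicator_def)
  show ?thesis by (rule Bochner_Integration.integrable_bound[OF I M A])
qed

lemma compl_ge: assumes "is_schedule n r p w" "i < n" shows "r i \<le> completion w r p i"
proof -
  obtain C where "r i \<le> C" "work_done w r i C = p i" using assms by (auto simp: is_schedule_def)
  then show ?thesis unfolding completion_def by (intro cInf_greatest) auto
qed

lemma compl_le: "r i \<le> C \<Longrightarrow> work_done w r i C = p i \<Longrightarrow> completion w r p i \<le> C"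
  unfolding completion_def by (rule cInf_lower) (auto intro: bdd_belowI[where m="r i"])

lemma W_le: assumes "is_schedule n r p w" "i < n" shows "IW w i a T \<le> p i"
proof -
  obtain C where C: "r i \<le> C" "work_done w r i C = p i" using assms by (auto simp: is_schedule_def)
  have cc: "completion w r p i \<le> C" using compl_le[of r i C w p, OF C] .
  have "IW w i a T \<le> IW w i (r i) C"
  proof (rule integral_mono[OF integ[OF assms] integ[OF assms]])
    fix t :: real
    show "indicator {a..T} t * w i t \<le> indicator {r i..C} t * w i t"
      using sched_zero_or_pending[OF assms, of t] sched_nonneg[OF assms, of t] cc
      by (cases "t \<in> {a..T}") (auto simp: indicator_def)
  qed
  then show ?thesis using C by (simp add: wd_eq)
qed

lemma W_eq: assumes "is_schedule n r p w" "i < n" "completion w r p i \<le> T" "a \<le> r i"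
  shows "IW w i a T = p i"
proof -
  obtain C where C: "r i \<le> C" "work_done w r i C = p i" using assms by (auto simp: is_schedule_def)
  have cc: "completion w r p i \<le> C" using compl_le[of r i C w p, OF C] .
  have "IW w i a T = IW w i (r i) C"
    apply (rule arg_cong[where f="integral\<^sup>L lborel"])
    apply (rule ext)
    subgoal for t
      using sched_zero_or_pending[OF assms(1,2), of t] cc assms(3,4)
      by (auto simp: indicator_def)
    done
  then show ?thesis using C by (simp add: wd_eq)
qed

lemma W_zero: assumes "is_schedule n r p w" "i < n" "completion w r p i \<le> a"
  shows "IW w i a T = 0"
proof -
  have "(\<lambda>t. indicator {a..T} t * w i t) = (\<lambda>t. 0)"
    using sched_zero_or_pending[OF assms(1,2)] assms(3) by (force simp: indicator_def)
  then show ?thesis by simp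
qed

lemma W_lt: assumes "is_schedule n r p w" "i < n" "T < completion w r p i" "a \<le> r i" "0 < p i"
  shows "IW w i a T < p i"
proof (cases "T < r i")
  case True
  have "(\<lambda>t. indicator {a..T} t * w i t) = (\<lambda>t. 0)"
    using sched_zero_or_pending[OF assms(1,2)] True by (force simp: indicator_def)
  then show ?thesis using assms(5) by simp
next
  case False
  have "IW w i a T = IW w i (r i) T"
    apply (rule arg_cong[where f="integral\<^sup>L lborel"])
    apply (rule ext)
    subgoal for t
      using sched_zero_or_pending[OF assms(1,2), of t] assms(4)
      by (auto simp: indicator_def)
    done
  moreover have "IW w i (r i) T \<noteq> p i"
    using compl_le[of r i T w p] False assms(3) by (auto simp: wd_eq)
  ultimately show ?thesis using W_le[OF assms(1,2), of a T] by simp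
qed

lemma sum_W_le: assumes "is_schedule n r p w" "B \<subseteq> {..<n}" "a \<le> b"
  shows "(\<Sum>j\<in>B. IW w j a b) \<le> b - a"
proof -
  have fin: "finite B" using assms(2) finite_subset by blast
  have "(\<Sum>j\<in>B. IW w j a b) = integral\<^sup>L lborel (\<lambda>t. \<Sum>j\<in>B. indicator {a..b} t * w j t)"
    by (subst Bochner_Integration.integral_sum) (use integ[OF assms(1)] assms(2) in auto)
  also have "\<dots> \<le> integral\<^sup>L lborel (indicator {a..b})"
  proof (rule integral_mono)
    show "integrable lborel (\<lambda>t. \<Sum>j\<in>B. indicator {a..b} t * w j t)"
      by (rule Bochner_Integration.integrable_sum) (use integ[OF assms(1)] assms(2) in blast)
    show "integrable lborel (indicator {a..b} :: real \<Rightarrow> real)"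
      by (rule integrable_real_indicator) (auto simp: emeasure_lborel_Icc_eq)
    fix t :: real
    have "(\<Sum>j\<in>B. w j t) \<le> (\<Sum>j<n. w j t)"
      by (rule sum_mono2) (use assms in \<open>auto simp: is_schedule_def\<close>)
    also have "\<dots> \<le> 1" using assms by (simp add: is_schedule_def)
    finally show "(\<Sum>j\<in>B. indicator {a..b} t * w j t) \<le> indicator {a..b} t"
      by (auto simp: indicator_def)
  qed
  also have "\<dots> = b - a" using assms(3) by simp
  finally show ?thesis .
qed


theorem mainTheorem1:
  fixes n :: nat and r p :: "nat \<Rightarrow> real" and S :: "nat list"
    and w pri :: "nat \<Rightarrow> real \<Rightarrow> real"
  assumes "\<forall>i<n. 0 \<le> r i" and "\<forall>i<n. 0 < p i"
    and "is_ordering n S"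
    and "is_schedule n r p w" and "has_completion_sequence r p w S"
    and "is_Pri n r p S pri"
  shows "dominates n r p pri w"
  unfolding dominates_def
proof (intro allI impI)
  fix i assume "i < n"
  have H: "is_schedule n r p pri \<and> (\<forall>i<n. \<forall>t. pri i t =
        (if pending pri r p i t \<and>
            (\<forall>a b. a < b \<and> b < length S \<and> S ! b = i \<longrightarrow> \<not> pending pri r p (S ! a) t)
         then 1 else 0))" using assms(6) unfolding is_Pri_def .
  have sp: "is_schedule n r p pri" using H by (rule conjunct1)
  note pri_def = conjunct2[OF H, rule_format]
  have dS: "distinct S" and setS: "set S = {..<n}" using assms(3) by (auto simp: is_ordering_def)
  have sw: "is_schedule n r p w" by fact
  define T where "T = completion w r p i"
  show "completion pri r p i \<le> completion w r p i"
  proof (rule ccontr)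
    assume "\<not> ?thesis"
    then have Ti: "T < completion pri r p i" by (simp add: T_def)
    have "i \<in> set S" using \<open>i < n\<close> setS by auto
    then obtain k where k: "k < length S" "S ! k = i" unfolding in_set_conv_nth by blast
    define A where "A = (\<lambda>a. S ! a) ` {..k}"
    have An: "A \<subseteq> {..<n}"
    proof
      fix j assume "j \<in> A"
      then obtain a where a: "a \<le> k" "j = S ! a" unfolding A_def by blast
      then have "a < length S" using k by simp
      then have "j \<in> set S" using a by simp
      then show "j \<in> {..<n}" using setS by simp
    qed
    have finA: "finite A" unfolding A_def by simp
    have iA: "i \<in> A" unfolding A_def using k by auto
    have cA: "\<And>j. j \<in> A \<Longrightarrow> completion w r p j \<le> T"
    proof -
      fix j assume "j \<in> A"
      then obtain a where a: "a \<le> k" "j = S ! a" unfolding A_def by auto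
      show "completion w r p j \<le> T"
      proof (cases "a = k")
        case True then show ?thesis using a k by (simp add: T_def)
      next
        case False
        then have "a < k" using a by simp
        then have "completion w r p (S!a) \<le> completion w r p (S!k)"
          using assms(5) k(1) unfolding has_completion_sequence_def by blast
        then show ?thesis using a k by (simp add: T_def)
      qed
    qed
    define P where "P t = (\<exists>j\<in>A. pending pri r p j t)" for t
    have PT: "P T" unfolding P_def pending_def using iA Ti compl_ge[OF sw \<open>i<n\<close>] by (auto simp: T_def)
    have P0: "P t \<Longrightarrow> 0 \<le> t" for t
    proof -
      assume "P t"
      then obtain j where "j \<in> A" "r j \<le> t" unfolding P_def pending_def by blast
      moreover have "0 \<le> r j" using \<open>j \<in> A\<close> An assms(1) by blast
      ultimately show "0 \<le> t" by linarith
    qed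
    define U where "U = {s. s \<le> T \<and> (\<forall>t. s \<le> t \<and> t \<le> T \<longrightarrow> P t)}"
    have TU: "T \<in> U" unfolding U_def using PT by auto
    have bdd: "bdd_below U" unfolding U_def by (rule bdd_belowI[where m=0]) (auto intro: P0)
    define u where "u = Inf U"
    have uT: "u \<le> T" unfolding u_def using TU bdd by (rule cInf_lower)
    have Pu: "\<And>t. u < t \<Longrightarrow> t \<le> T \<Longrightarrow> P t"
    proof -
      fix t assume "u < t" "t \<le> T"
      then obtain s where "s \<in> U" "s < t" using cInf_less_iff[of U t] TU bdd unfolding u_def by auto
      then show "P t" using \<open>t \<le> T\<close> unfolding U_def by auto
    qed
    have small: "\<And>j. j \<in> A \<Longrightarrow> r j < u \<Longrightarrow> completion pri r p j \<le> u"
    proof (rule ccontr)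
      fix j assume j: "j \<in> A" "r j < u" "\<not> completion pri r p j \<le> u"
      have "r j \<in> U" unfolding U_def
      proof (intro CollectI conjI allI impI)
        show "r j \<le> T" using j uT by simp
        fix t assume t: "r j \<le> t \<and> t \<le> T"
        show "P t"
        proof (cases "t \<le> u")
          case True
          then have "pending pri r p j t" unfolding pending_def using j t by simp
          then show ?thesis unfolding P_def using j by blast
        next
          case False then show ?thesis using Pu t by simp
        qed
      qed
      then have "u \<le> r j" unfolding u_def using bdd by (rule cInf_lower)
      then show False using j by simp
    qed
    define B where "B = {j\<in>A. u \<le> r j}"
    have "\<not> r i < u" using small[OF iA] Ti uT by linarith
    then have iB: "i \<in> B" unfolding B_def using iA by simp
    have BA: "B \<subseteq> A" unfolding B_def by auto
    have finB: "finite B" using finA BA finite_subset by blast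
    have Bn: "B \<subseteq> {..<n}" using An BA by auto
    have first: "\<And>t. P t \<Longrightarrow> 1 \<le> (\<Sum>j\<in>A. pri j t)"
    proof -
      fix t assume "P t"
      then obtain j where j: "j \<in> A" "pending pri r p j t" unfolding P_def by auto
      then obtain a where a: "a \<le> k" "j = S ! a" unfolding A_def by auto
      define a0 where "a0 = (LEAST a. pending pri r p (S ! a) t)"
      have pa: "pending pri r p (S ! a) t" using j a by simp
      have pa0: "pending pri r p (S ! a0) t" unfolding a0_def using pa by (rule LeastI)
      have a0a: "a0 \<le> a" unfolding a0_def using pa by (rule Least_le)
      have a0len: "a0 < length S" using a0a a k by simp
      have a0A: "S ! a0 \<in> A" unfolding A_def using a0a a by auto
      have a0n: "S ! a0 < n" using a0A An by auto
      have "pri (S ! a0) t = 1"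
      proof -
        have "\<forall>a' b. a' < b \<and> b < length S \<and> S ! b = S ! a0 \<longrightarrow> \<not> pending pri r p (S ! a') t"
        proof (intro allI impI)
          fix a' b assume h: "a' < b \<and> b < length S \<and> S ! b = S ! a0"
          then have "b = a0" using dS a0len nth_eq_iff_index_eq by blast
          then have "a' < (LEAST a. pending pri r p (S ! a) t)" using h unfolding a0_def by simp
          then show "\<not> pending pri r p (S ! a') t" by (rule not_less_Least)
        qed
        then show ?thesis using pri_def[OF a0n, of t] pa0 by simp
      qed
      moreover have "pri (S ! a0) t \<le> (\<Sum>j\<in>A. pri j t)"
        by (rule member_le_sum) (use a0A finA An sched_nonneg[OF sp] in auto)
      ultimately show "1 \<le> (\<Sum>j\<in>A. pri j t)" by simp
    qed
    have I1: "integrable lborel (indicator {u<..T} :: real \<Rightarrow> real)"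
      by (rule integrable_real_indicator) (use uT in auto)
    have "T - u = integral\<^sup>L lborel (indicator {u<..T} :: real \<Rightarrow> real)" using uT by simp
    also have "\<dots> \<le> integral\<^sup>L lborel (\<lambda>t. \<Sum>j\<in>A. indicator {u..T} t * pri j t)"
    proof (rule integral_mono[OF I1])
      show "integrable lborel (\<lambda>t. \<Sum>j\<in>A. indicator {u..T} t * pri j t)"
        by (rule Bochner_Integration.integrable_sum) (use integ[OF sp] An in blast)
      fix t :: real
      show "indicator {u<..T} t \<le> (\<Sum>j\<in>A. indicator {u..T} t * pri j t)"
      proof (cases "u < t \<and> t \<le> T")
        case True
        then show ?thesis using first[OF Pu] by (auto simp: indicator_def)
      next
        case False
        have "0 \<le> (\<Sum>j\<in>A. indicator {u..T} t * pri j t)"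
          by (rule sum_nonneg) (use An sched_nonneg[OF sp] in \<open>auto simp: indicator_def\<close>)
        then show ?thesis using False by (auto simp: indicator_def)
      qed
    qed
    also have "\<dots> = (\<Sum>j\<in>A. IW pri j u T)"
      by (subst Bochner_Integration.integral_sum) (use integ[OF sp] An in auto)
    also have "\<dots> = (\<Sum>j\<in>B. IW pri j u T) + (\<Sum>j\<in>A-B. IW pri j u T)"
      by (simp add: sum.subset_diff[OF BA finA])
    also have "(\<Sum>j\<in>A-B. IW pri j u T) = 0"
    proof (rule sum.neutral, rule ballI)
      fix j assume "j \<in> A - B"
      then have "j \<in> A" "r j < u" unfolding B_def by auto
      then show "IW pri j u T = 0" using W_zero[OF sp _ small] An by blast
    qed
    also have "(\<Sum>j\<in>B. IW pri j u T) < (\<Sum>j\<in>B. p j)"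
    proof (rule sum_strict_mono_ex1[OF finB])
      show "\<forall>j\<in>B. IW pri j u T \<le> p j" using W_le[OF sp] Bn by auto
      show "\<exists>j\<in>B. IW pri j u T < p j"
        using iB W_lt[OF sp \<open>i<n\<close> Ti] assms(2) \<open>i<n\<close> by (auto simp: B_def)
    qed
    also have "(\<Sum>j\<in>B. p j) = (\<Sum>j\<in>B. IW w j u T)"
      by (rule sum.cong) (use W_eq[OF sw] Bn cA BA in \<open>auto simp: B_def\<close>)
    also have "\<dots> \<le> T - u" by (rule sum_W_le[OF sw Bn uT])
    finally show False by simp
  qed
qed

end
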